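(* Let $V \subseteq \mathbb{R}^7$ be a linear subspace, let $V\lrcorner\varphi = \{v\lrcorner\varphi : v\in V\}$ and $\Lambda^2(V) = \mathrm{Span}\{u\wedge v : u,v\in V\}$, both subspaces of $\Lambda^2(\mathbb{R}^7)$. Then: - if $V = \mathbb{R}^7$, then $\Lambda^2(V)\cap(V\lrcorner\varphi) = \Lambda^2_7$; - if $V$ is a proper subspace, then $\Lambda^2(V)\cap(V\lrcorner\varphi) = \{0\}$.
   Context: Equip $\mathbb{R}^7$ with its standard inner product and basis. Let $\varphi = e_{123} - e_{167} - e_{527} - e_{563} - e_{415} - e_{426} - e_{437}$ ($e_{ijk} = e_i\wedge e_j\wedge e_k$). For $u,v$: $u\wedge v$ is the 2-form $(a,b)\mapsto \langle u,a\rangle\langle v,b\rangle - \langle u,b\rangle\langle v,a\rangle$; $u\lrcorner\varphi$ is the 2-form $(a,b)\mapsto\varphi(u,a,b)$. $\Lambda^2_7 = \{u\lrcorner\varphi : u\in\mathbb{R}^7\}$. *)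

theory Defs
  imports "HOL-Analysis.Analysis"
begin

text \<open>R^7 is modelled as real^7. The paper's basis index i in {1..7}
  corresponds to the index (of_nat (i - 1)) of the finite type 7.\<close>

definition idx :: "nat \<Rightarrow> 7" where
  "idx i = of_nat (i - 1)"

definition ebasis :: "nat \<Rightarrow> real^7" where
  "ebasis i = axis (idx i) 1"

text \<open>e_i \<and> e_j \<and> e_k as a trilinear alternating form (determinant convention).\<close>
definition e3 :: "nat \<Rightarrow> nat \<Rightarrow> nat \<Rightarrow> real^7 \<Rightarrow> real^7 \<Rightarrow> real^7 \<Rightarrow> real" where
  "e3 i j k a b c =
     (let ai = a \<bullet> ebasis i; aj = a \<bullet> ebasis j; ak = a \<bullet> ebasis k;
          bi = b \<bullet> ebasis i; bj = b \<bullet> ebasis j; bk = b \<bullet> ebasis k;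
          ci = c \<bullet> ebasis i; cj = c \<bullet> ebasis j; ck = c \<bullet> ebasis k
      in ai * (bj * ck - bk * cj) - aj * (bi * ck - bk * ci) + ak * (bi * cj - bj * ci))"

definition phi :: "real^7 \<Rightarrow> real^7 \<Rightarrow> real^7 \<Rightarrow> real" where
  "phi a b c = e3 1 2 3 a b c - e3 1 6 7 a b c - e3 5 2 7 a b c - e3 5 6 3 a b c
              - e3 4 1 5 a b c - e3 4 2 6 a b c - e3 4 3 7 a b c"

definition wedge :: "real^7 \<Rightarrow> real^7 \<Rightarrow> real^7 \<Rightarrow> real^7 \<Rightarrow> real" where
  "wedge u v = (\<lambda>a b. (u \<bullet> a) * (v \<bullet> b) - (u \<bullet> b) * (v \<bullet> a))"

definition contr :: "real^7 \<Rightarrow> real^7 \<Rightarrow> real^7 \<Rightarrow> real" where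
  "contr u = (\<lambda>a b. phi u a b)"

definition Lam2 :: "(real^7) set \<Rightarrow> (real^7 \<Rightarrow> real^7 \<Rightarrow> real) set" where
  "Lam2 V = {\<omega>. \<exists>(n::nat) (c::nat \<Rightarrow> real) u v. (\<forall>k<n. u k \<in> V \<and> v k \<in> V) \<and>
                 \<omega> = (\<lambda>a b. \<Sum>k<n. c k * wedge (u k) (v k) a b)}"

definition Lam2_7 :: "(real^7 \<Rightarrow> real^7 \<Rightarrow> real) set" where
  "Lam2_7 = {contr u | u. True}"

end

theory Submission
  imports Defs
begin

lemma exhaust_7:
  fixes x :: 7
  shows "x = 0 \<or> x = 1 \<or> x = 2 \<or> x = 3 \<or> x = 4 \<or> x = 5 \<or> x = 6"
proof (induct x)
  case (of_int z)
  then have "z = 0 \<or> z = 1 \<or> z = 2 \<or> z = 3 \<or> z = 4 \<or> z = 5 \<or> z = 6" by fastforce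
  then show ?case by auto
qed

lemma UNIV_7: "(UNIV::7 set) = {0,1,2,3,4,5,6}"
  using exhaust_7 by auto

lemma inner7: "(x::real^7) \<bullet> y = x$0 * y$0 + x$1 * y$1 + x$2 * y$2 + x$3 * y$3 + x$4 * y$4 + x$5 * y$5 + x$6 * y$6"
  unfolding inner_vec_def UNIV_7 by simp

lemma eb: "a \<bullet> ebasis 1 = a$0" "a \<bullet> ebasis 2 = a$1" "a \<bullet> ebasis 3 = a$2" "a \<bullet> ebasis 4 = a$3"
  "a \<bullet> ebasis 5 = a$4" "a \<bullet> ebasis 6 = a$5" "a \<bullet> ebasis 7 = a$6"
  by (simp_all add: ebasis_def idx_def inner_axis)

lemma poly: fixes vA wA vB wB vC wC vD wD vE wE vF wF vG wG :: real
  shows "(vB * wC - vC * wB + vD * wE - vE * wD - vF * wG + vG * wF)^2 + (- vA * wC + vC * wA + vD * wF + vE * wG - vF * wD - vG * wE)^2 + (vA * wB - vB * wA + vD * wG - vE * wF + vF * wE - vG * wD)^2 + (- vA * wE - vB * wF - vC * wG + vE * wA + vF * wB + vG * wC)^2 + (vA * wD - vB * wG + vC * wF - vD * wA - vF * wC + vG * wB)^2 + (vA * wG + vB * wD - vC * wE - vD * wB + vE * wC - vG * wA)^2 + (- vA * wF + vB * wE + vC * wD - vD * wC - vE * wB + vF * wA)^2 = (vA * vA + vB * vB + vC * vC + vD * vD + vE * vE + vF * vF + vG * vG)  *  (wA * wA + wB * wB + wC * wC + wD * wD + wE * wE + wF * wF + wG * wG) - (vA * wA + vB * wB + vC * wC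 + vD * wD + vE * wE + vF * wF + vG * wG)^2"
  by algebra

lemma ph0: "phi v w (axis 0 1) = (v$1 * w$2 - v$2 * w$1 + v$3 * w$4 - v$4 * w$3 - v$5 * w$6 + v$6 * w$5)"
  unfolding phi_def e3_def Let_def eb by (simp add: axis_def algebra_simps)

lemma ph1: "phi v w (axis 1 1) = (- v$0 * w$2 + v$2 * w$0 + v$3 * w$5 + v$4 * w$6 - v$5 * w$3 - v$6 * w$4)"
  unfolding phi_def e3_def Let_def eb by (simp add: axis_def algebra_simps)

lemma ph2: "phi v w (axis 2 1) = (v$0 * w$1 - v$1 * w$0 + v$3 * w$6 - v$4 * w$5 + v$5 * w$4 - v$6 * w$3)"
  unfolding phi_def e3_def Let_def eb by (simp add: axis_def algebra_simps)

lemma ph3: "phi v w (axis 3 1) = (- v$0 * w$4 - v$1 * w$5 - v$2 * w$6 + v$4 * w$0 + v$5 * w$1 + v$6 * w$2)"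
  unfolding phi_def e3_def Let_def eb by (simp add: axis_def algebra_simps)

lemma ph4: "phi v w (axis 4 1) = (v$0 * w$3 - v$1 * w$6 + v$2 * w$5 - v$3 * w$0 - v$5 * w$2 + v$6 * w$1)"
  unfolding phi_def e3_def Let_def eb by (simp add: axis_def algebra_simps)

lemma ph5: "phi v w (axis 5 1) = (v$0 * w$6 + v$1 * w$3 - v$2 * w$4 - v$3 * w$1 + v$4 * w$2 - v$6 * w$0)"
  unfolding phi_def e3_def Let_def eb by (simp add: axis_def algebra_simps)

lemma ph6: "phi v w (axis 6 1) = (- v$0 * w$5 + v$1 * w$4 + v$2 * w$3 - v$3 * w$2 - v$4 * w$1 + v$5 * w$0)"
  unfolding phi_def e3_def Let_def eb by (simp add: axis_def algebra_simps)


lemma Lam2_zero: "(\<lambda>a b. 0) \<in> Lam2 V"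
  unfolding Lam2_def by (rule CollectI, rule exI[of _ 0]) auto

lemma Lam2_step:
  assumes "f \<in> Lam2 V" "x \<in> V" "y \<in> V"
  shows "(\<lambda>a b. f a b + s * wedge x y a b) \<in> Lam2 V"
proof -
  obtain n :: nat and c u v where h: "\<forall>k<n. u k \<in> V \<and> v k \<in> V"
    "f = (\<lambda>a b. \<Sum>k<n. c k * wedge (u k) (v k) a b)"
    using assms(1) unfolding Lam2_def by blast
  let ?c = "c(n := s)" and ?u = "u(n := x)" and ?v = "v(n := y)"
  have "\<forall>k<Suc n. ?u k \<in> V \<and> ?v k \<in> V" using h(1) assms by auto
  moreover have "(\<lambda>a b. f a b + s * wedge x y a b) = (\<lambda>a b. \<Sum>k<Suc n. ?c k * wedge (?u k) (?v k) a b)"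
    using h(2) by (auto intro!: sum.cong)
  ultimately show ?thesis unfolding Lam2_def by blast
qed

lemma Lam2_e3:
  assumes "f \<in> Lam2 UNIV"
  shows "(\<lambda>a b. f a b + s * e3 i j k u a b) \<in> Lam2 UNIV"
proof -
  let ?g1 = "\<lambda>a b. f a b + (s * (u \<bullet> ebasis i)) * wedge (ebasis j) (ebasis k) a b"
  let ?g2 = "\<lambda>a b. ?g1 a b + (- (s * (u \<bullet> ebasis j))) * wedge (ebasis i) (ebasis k) a b"
  let ?g3 = "\<lambda>a b. ?g2 a b + (s * (u \<bullet> ebasis k)) * wedge (ebasis i) (ebasis j) a b"
  have "?g3 \<in> Lam2 UNIV"
    by (intro Lam2_step assms UNIV_I)
  moreover have "?g3 = (\<lambda>a b. f a b + s * e3 i j k u a b)"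
    by (intro ext) (simp add: e3_def wedge_def Let_def inner_commute algebra_simps)
  ultimately show ?thesis by simp
qed

lemma contr_Lam2: "contr u \<in> Lam2 UNIV"
proof -
  have "(\<lambda>a b. 0 + 1 * e3 1 2 3 u a b + (-1) * e3 1 6 7 u a b + (-1) * e3 5 2 7 u a b
     + (-1) * e3 5 6 3 u a b + (-1) * e3 4 1 5 u a b + (-1) * e3 4 2 6 u a b
     + (-1) * e3 4 3 7 u a b) \<in> Lam2 UNIV"
    by (intro Lam2_e3[where f="\<lambda>a b. _ a b", simplified] Lam2_zero)
  moreover have "(\<lambda>a b. 0 + 1 * e3 1 2 3 u a b + (-1) * e3 1 6 7 u a b + (-1) * e3 5 2 7 u a b
     + (-1) * e3 5 6 3 u a b + (-1) * e3 4 1 5 u a b + (-1) * e3 4 2 6 u a b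
     + (-1) * e3 4 3 7 u a b) = contr u"
    by (intro ext) (simp add: contr_def phi_def)
  ultimately show ?thesis by simp
qed

lemma Lam2_orth:
  assumes "\<omega> \<in> Lam2 V" "\<And>x. x \<in> V \<Longrightarrow> x \<bullet> w = 0"
  shows "\<omega> w b = 0"
proof -
  obtain n :: nat and c u v where h: "\<forall>k<n. u k \<in> V \<and> v k \<in> V"
    "\<omega> = (\<lambda>a b. \<Sum>k<n. c k * wedge (u k) (v k) a b)"
    using assms(1) unfolding Lam2_def by blast
  show ?thesis unfolding h(2) wedge_def
    by (intro sum.neutral ballI) (simp add: h(1) assms(2))
qed

lemma contr_zero: "contr 0 = (\<lambda>a b. 0)"
  by (intro ext) (simp add: contr_def phi_def e3_def Let_def)

lemma cross_zero:
  assumes "\<And>j. phi v w (axis j 1) = 0" "v \<bullet> w = 0" "w \<noteq> 0"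
  shows "v = 0"
proof -
  have P: "(v\<bullet>v) * (w\<bullet>w) - (v\<bullet>w)^2 = 0"
    using poly[where vA="v$0" and wA="w$0" and vB="v$1" and wB="w$1" and vC="v$2" and wC="w$2" and vD="v$3" and wD="w$3" and vE="v$4" and wE="w$4" and vF="v$5" and wF="w$5" and vG="v$6" and wG="w$6"] assms(1)[of 0] assms(1)[of 1] assms(1)[of 2] assms(1)[of 3]
      assms(1)[of 4] assms(1)[of 5] assms(1)[of 6]
    unfolding ph0 ph1 ph2 ph3 ph4 ph5 ph6 inner7 by simp
  have "w \<bullet> w \<noteq> 0" using assms(3) by simp
  with P assms(2) have "v \<bullet> v = 0" by simp
  then show ?thesis by simp
qed

theorem lemma4p10:
  fixes V :: "(real^7) set"
  assumes "subspace V"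
  shows "(V = UNIV \<longrightarrow> Lam2 V \<inter> contr ` V = Lam2_7)
       \<and> (V \<noteq> UNIV \<longrightarrow> Lam2 V \<inter> contr ` V = {\<lambda>a b. 0})"
proof (intro conjI impI)
  assume "V = UNIV"
  then show "Lam2 V \<inter> contr ` V = Lam2_7"
    unfolding Lam2_7_def using contr_Lam2 by auto
next
  assume ne: "V \<noteq> UNIV"
  have sV: "span V = V" using assms by (simp add: span_eq_iff)
  have "span V \<subset> span (UNIV::(real^7) set)" unfolding sV span_UNIV using ne by blast
  then obtain w where w: "w \<noteq> 0" "\<And>y. y \<in> span V \<Longrightarrow> orthogonal w y"
    using orthogonal_to_subspace_exists_gen by blast
  have wo: "x \<bullet> w = 0" if "x \<in> V" for x
    using w(2)[of x] that sV by (simp add: orthogonal_def inner_commute)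
  show "Lam2 V \<inter> contr ` V = {\<lambda>a b. 0}"
  proof
    show "{\<lambda>a b. 0} \<subseteq> Lam2 V \<inter> contr ` V"
      using Lam2_zero contr_zero subspace_0[OF assms] by (metis IntI empty_subsetI image_eqI insert_subset)
  next
    show "Lam2 V \<inter> contr ` V \<subseteq> {\<lambda>a b. 0}"
    proof
      fix \<omega> assume "\<omega> \<in> Lam2 V \<inter> contr ` V"
      then obtain v where v: "v \<in> V" "\<omega> = contr v" "\<omega> \<in> Lam2 V" by blast
      have "phi v w (axis j 1) = 0" for j
        using Lam2_orth[OF v(3) wo, of "axis j 1"] v(2) by (simp add: contr_def)
      then have "v = 0" using cross_zero wo[OF v(1)] w(1) by blast
      then show "\<omega> \<in> {\<lambda>a b. 0}" using v(2) contr_zero by simp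
    qed
  qed
qed

end
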